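(* For every $n\ge1$, the set of transitive integer relations on $[n]$, ordered by the weak order on integer relations, is a lattice (though not a sublattice of the weak order on all integer relations), and the set of integer posets on $[n]$ (antisymmetric transitive integer relations) is a sublattice of this lattice of transitive integer relations.
   Context: An integer relation of size $n$ is a reflexive binary relation $R$ on $[n]=\{1,\dots,n\}$. Its increasing part is $\mathrm{Inc}(R)=\{(a,b)\in R: a<b\}$ and its decreasing part is $\mathrm{Dec}(R)=\{(b,a)\in R: a<b\}$. The weak order on integer relations: $R\le S$ iff $\mathrm{Inc}(S)\subseteq\mathrm{Inc}(R)$ and $\mathrm{Dec}(R)\subseteq\mathrm{Dec}(S)$. An integer poset is an integer relation that is antisymmetric and transitive. *)

theory Defs
  imports Main
begin

definition int_rel :: "nat \<Rightarrow> (nat \<times> nat) set \<Rightarrow> bool" where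
  "int_rel n R \<longleftrightarrow> R \<subseteq> {1..n} \<times> {1..n} \<and> (\<forall>i\<in>{1..n}. (i, i) \<in> R)"

definition Inc :: "(nat \<times> nat) set \<Rightarrow> (nat \<times> nat) set" where
  "Inc R = {(a, b). (a, b) \<in> R \<and> a < b}"

definition Dec :: "(nat \<times> nat) set \<Rightarrow> (nat \<times> nat) set" where
  "Dec R = {(b, a). (b, a) \<in> R \<and> a < b}"

definition weak_le :: "(nat \<times> nat) set \<Rightarrow> (nat \<times> nat) set \<Rightarrow> bool" where
  "weak_le R S \<longleftrightarrow> Inc S \<subseteq> Inc R \<and> Dec R \<subseteq> Dec S"

definition int_rels :: "nat \<Rightarrow> (nat \<times> nat) set set" where
  "int_rels n = {R. int_rel n R}"

definition trans_int_rels :: "nat \<Rightarrow> (nat \<times> nat) set set" where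
  "trans_int_rels n = {R. int_rel n R \<and> trans R}"

definition int_posets :: "nat \<Rightarrow> (nat \<times> nat) set set" where
  "int_posets n = {R. int_rel n R \<and> antisym R \<and> trans R}"

definition is_weak_glb :: "(nat \<times> nat) set set \<Rightarrow> (nat \<times> nat) set \<Rightarrow> (nat \<times> nat) set \<Rightarrow> (nat \<times> nat) set \<Rightarrow> bool" where
  "is_weak_glb A R S M \<longleftrightarrow> M \<in> A \<and> weak_le M R \<and> weak_le M S \<and>
     (\<forall>X\<in>A. weak_le X R \<and> weak_le X S \<longrightarrow> weak_le X M)"

definition is_weak_lub :: "(nat \<times> nat) set set \<Rightarrow> (nat \<times> nat) set \<Rightarrow> (nat \<times> nat) set \<Rightarrow> (nat \<times> nat) set \<Rightarrow> bool" where
  "is_weak_lub A R S J \<longleftrightarrow> J \<in> A \<and> weak_le R J \<and> weak_le S J \<and>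
     (\<forall>X\<in>A. weak_le R X \<and> weak_le S X \<longrightarrow> weak_le J X)"

definition weak_lattice :: "(nat \<times> nat) set set \<Rightarrow> bool" where
  "weak_lattice A \<longleftrightarrow> (\<forall>R\<in>A. \<forall>S\<in>A. (\<exists>M. is_weak_glb A R S M) \<and> (\<exists>J. is_weak_lub A R S J))"

definition weak_sublattice :: "(nat \<times> nat) set set \<Rightarrow> (nat \<times> nat) set set \<Rightarrow> bool" where
  "weak_sublattice B A \<longleftrightarrow> B \<subseteq> A \<and>
     (\<forall>R\<in>B. \<forall>S\<in>B. (\<forall>M. is_weak_glb A R S M \<longrightarrow> M \<in> B) \<and> (\<forall>J. is_weak_lub A R S J \<longrightarrow> J \<in> B))"

end

theory Submission
  imports Defs
begin

lemma Inc_iff[simp]: "(a,b) \<in> Inc R \<longleftrightarrow> (a,b) \<in> R \<and> a < b"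
  by (auto simp: Inc_def)

lemma Dec_iff[simp]: "(b,a) \<in> Dec R \<longleftrightarrow> (b,a) \<in> R \<and> a < b"
  by (auto simp: Dec_def)

definition Dj :: "(nat \<times> nat) set \<Rightarrow> (nat \<times> nat) set \<Rightarrow> (nat \<times> nat) set" where
  "Dj R S = Dec R \<union> Dec S"

definition good :: "(nat \<times> nat) set \<Rightarrow> (nat \<times> nat) set \<Rightarrow> nat \<Rightarrow> nat \<Rightarrow> bool" where
  "good R S a c \<longleftrightarrow> a < c \<and> (\<forall>x z. (x,a) \<in> (Dj R S)\<^sup>* \<longrightarrow> (c,z) \<in> (Dj R S)\<^sup>* \<longrightarrow> x < z \<longrightarrow> (x,z) \<in> R \<and> (x,z) \<in> S)"

definition Jn :: "nat \<Rightarrow> (nat \<times> nat) set \<Rightarrow> (nat \<times> nat) set \<Rightarrow> (nat \<times> nat) set" where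
  "Jn n R S = Id_on {1..n} \<union> (Dj R S)\<^sup>+ \<union> {(a,c). good R S a c}"

lemma Dj_dec: "(p,q) \<in> Dj R S \<Longrightarrow> q < p"
  by (auto simp: Dj_def Dec_def)

lemma Dj_trancl_dec: "(p,q) \<in> (Dj R S)\<^sup>+ \<Longrightarrow> q < p"
  by (induction rule: trancl_induct) (auto dest: Dj_dec)

lemma good_mem: "good R S a c \<Longrightarrow> (a,c) \<in> R \<and> (a,c) \<in> S"
  unfolding good_def by blast

context
  fixes R S :: "(nat \<times> nat) set"
  assumes tR: "trans R" and tS: "trans S"
begin

lemma step1:
  assumes g: "good R S a b" and d: "(b,w) \<in> Dj R S"
  shows "(a < w \<and> good R S a w) \<or> (w < a \<and> (a,w) \<in> Dj R S) \<or> w = a"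
proof -
  have ab: "(a,b) \<in> R" "(a,b) \<in> S" using good_mem[OF g] by auto
  consider "a < w" | "w < a" | "w = a" by linarith
  then show ?thesis
  proof cases
    case 1
    have "good R S a w" unfolding good_def
    proof (rule conjI[OF 1], intro allI impI)
      fix x z assume h: "(x,a) \<in> (Dj R S)\<^sup>*" "(w,z) \<in> (Dj R S)\<^sup>*" "x < z"
      have "(b,z) \<in> (Dj R S)\<^sup>*" using d h(2) by (meson converse_rtrancl_into_rtrancl)
      then show "(x,z) \<in> R \<and> (x,z) \<in> S" using g h unfolding good_def by blast
    qed
    then show ?thesis using 1 by auto
  next
    case 2
    have "(b,w) \<in> R \<and> w < b \<or> (b,w) \<in> S \<and> w < b" using d by (auto simp: Dj_def Dec_def)
    then have "(a,w) \<in> R \<or> (a,w) \<in> S" using ab tR tS by (meson transD)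
    then show ?thesis using 2 by (auto simp: Dj_def)
  qed auto
qed

lemma step2:
  assumes d: "(w,a) \<in> Dj R S" and g: "good R S a b"
  shows "(w < b \<and> good R S w b) \<or> (b < w \<and> (w,b) \<in> Dj R S) \<or> w = b"
proof -
  have ab: "(a,b) \<in> R" "(a,b) \<in> S" using good_mem[OF g] by auto
  consider "w < b" | "b < w" | "w = b" by linarith
  then show ?thesis
  proof cases
    case 1
    have "good R S w b" unfolding good_def
    proof (rule conjI[OF 1], intro allI impI)
      fix x z assume h: "(x,w) \<in> (Dj R S)\<^sup>*" "(b,z) \<in> (Dj R S)\<^sup>*" "x < z"
      have "(x,a) \<in> (Dj R S)\<^sup>*" using d h(1) by (meson rtrancl_into_rtrancl)
      then show "(x,z) \<in> R \<and> (x,z) \<in> S" using g h unfolding good_def by blast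
    qed
    then show ?thesis using 1 by auto
  next
    case 2
    have "(w,a) \<in> R \<and> a < w \<or> (w,a) \<in> S \<and> a < w" using d by (auto simp: Dj_def Dec_def)
    then have "(w,b) \<in> R \<or> (w,b) \<in> S" using ab tR tS by (meson transD)
    then show ?thesis using 2 by (auto simp: Dj_def)
  qed auto
qed

lemma chain1:
  assumes "(y,z) \<in> (Dj R S)\<^sup>+"
  shows "good R S x y \<Longrightarrow> (x < z \<and> good R S x z) \<or> (z < x \<and> (x,z) \<in> (Dj R S)\<^sup>+)
     \<or> (x = z \<and> (\<exists>w. good R S x w \<and> (w,x) \<in> Dj R S))"
  using assms
proof (induction arbitrary: x rule: converse_trancl_induct)
  case (base y)
  from step1[OF base(2) base(1)] show ?case using base by auto
next
  case (step y w)
  from step1[OF step(4) step(1)] show ?case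
  proof (elim disjE conjE)
    assume "x < w" "good R S x w" then show ?thesis using step(3) by blast
  next
    assume "w < x" "(x,w) \<in> Dj R S"
    then have "(x,z) \<in> (Dj R S)\<^sup>+" using step(2) by (meson trancl_into_trancl2)
    then show ?thesis using Dj_trancl_dec by blast
  next
    assume "w = x" then show ?thesis using step(2) Dj_trancl_dec by blast
  qed
qed

lemma chain2:
  assumes "(x,y) \<in> (Dj R S)\<^sup>+"
  shows "good R S y z \<Longrightarrow> (x < z \<and> good R S x z) \<or> (z < x \<and> (x,z) \<in> (Dj R S)\<^sup>+)
     \<or> (x = z \<and> (\<exists>w. (x,w) \<in> Dj R S \<and> good R S w x))"
  using assms
proof (induction arbitrary: z rule: trancl_induct)
  case (base y)
  from step2[OF base(1) base(2)] show ?case using base by auto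
next
  case (step w y)
  from step2[OF step(2) step(4)] show ?case
  proof (elim disjE conjE)
    assume "w < z" "good R S w z" then show ?thesis using step(3) by blast
  next
    assume "z < w" "(w,z) \<in> Dj R S"
    then have "(x,z) \<in> (Dj R S)\<^sup>+" using step(1) by (meson trancl_into_trancl)
    then show ?thesis using Dj_trancl_dec by blast
  next
    assume "w = z" then show ?thesis using step(1) Dj_trancl_dec by blast
  qed
qed

lemma good_trans:
  assumes gab: "good R S a b" and gbc: "good R S b c"
  shows "good R S a c"
  unfolding good_def
proof (rule conjI, goal_cases)
  case 1 show "a < c" using gab gbc by (auto simp: good_def)
next
  case 2 show ?case
  proof (intro allI impI)
  fix x z assume xa: "(x,a) \<in> (Dj R S)\<^sup>*" and cz: "(c,z) \<in> (Dj R S)\<^sup>*" and xz: "x < z"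
  have X: "x = b \<or> (x < b \<and> good R S x b) \<or> (x,b) \<in> (Dj R S)\<^sup>+"
  proof (cases "x = a")
    case True then show ?thesis using gab by (auto simp: good_def)
  next
    case False
    then have "(x,a) \<in> (Dj R S)\<^sup>+" using xa by (auto simp: rtrancl_eq_or_trancl)
    from chain2[OF this gab] show ?thesis by blast
  qed
  have Z: "b = z \<or> (b < z \<and> good R S b z) \<or> (b,z) \<in> (Dj R S)\<^sup>+"
  proof (cases "z = c")
    case True then show ?thesis using gbc by (auto simp: good_def)
  next
    case False
    then have "(c,z) \<in> (Dj R S)\<^sup>+" using cz by (auto simp: rtrancl_eq_or_trancl)
    from chain1[OF this gbc] show ?thesis by blast
  qed
  from X show "(x,z) \<in> R \<and> (x,z) \<in> S"
  proof (elim disjE conjE)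
    assume "x = b"
    with Z xz show ?thesis using Dj_trancl_dec good_mem by force
  next
    assume xb: "x < b" "good R S x b"
    from Z show ?thesis
    proof (elim disjE conjE)
      assume "b = z" then show ?thesis using xb good_mem by simp
    next
      assume "b < z" "good R S b z" then show ?thesis using xb good_mem tR tS by (meson transD)
    next
      assume "(b,z) \<in> (Dj R S)\<^sup>+"
      from chain1[OF this xb(2)] xz show ?thesis using good_mem by auto
    qed
  next
    assume xb: "(x,b) \<in> (Dj R S)\<^sup>+"
    from Z show ?thesis
    proof (elim disjE conjE)
      assume "b = z" then show ?thesis using xb xz Dj_trancl_dec by force
    next
      assume "b < z" "good R S b z"
      from chain2[OF xb this(2)] xz show ?thesis using good_mem by auto
    next
      assume "(b,z) \<in> (Dj R S)\<^sup>+" then show ?thesis using xb xz Dj_trancl_dec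
        by (meson less_trans not_less_iff_gr_or_eq)
    qed
  qed
  qed
qed

end

lemma Dj_trancl_sub:
  assumes "int_rel n R" "int_rel n S"
  shows "(Dj R S)\<^sup>+ \<subseteq> {1..n} \<times> {1..n}"
proof (rule trancl_subset_Sigma)
  show "Dj R S \<subseteq> {1..n} \<times> {1..n}" using assms by (auto simp: Dj_def Dec_def int_rel_def)
qed

lemma good_sub: "int_rel n R \<Longrightarrow> good R S a c \<Longrightarrow> a \<in> {1..n} \<and> c \<in> {1..n}"
  using good_mem[of R S a c] by (auto simp: int_rel_def)

lemma Jn_trans:
  assumes R: "R \<in> trans_int_rels n" and S: "S \<in> trans_int_rels n"
  shows "trans (Jn n R S)"
proof (rule transI)
  have tR: "trans R" and tS: "trans S" and iR: "int_rel n R" and iS: "int_rel n S"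
    using R S by (auto simp: trans_int_rels_def)
  note sub = Dj_trancl_sub[OF iR iS]
  fix a b c assume ab: "(a,b) \<in> Jn n R S" and bc: "(b,c) \<in> Jn n R S"
  consider "a = b" | "b = c" | "(a,b) \<in> (Dj R S)\<^sup>+ \<and> (b,c) \<in> (Dj R S)\<^sup>+"
    | "(a,b) \<in> (Dj R S)\<^sup>+ \<and> good R S b c" | "good R S a b \<and> (b,c) \<in> (Dj R S)\<^sup>+"
    | "good R S a b \<and> good R S b c"
    using ab bc unfolding Jn_def by auto
  then show "(a,c) \<in> Jn n R S"
  proof cases
    case 1 then show ?thesis using bc by simp
  next
    case 2 then show ?thesis using ab by simp
  next
    case 3 then show ?thesis unfolding Jn_def by (meson UnI1 UnI2 trancl_trans)
  next
    case 4
    from chain2[OF tR tS conjunct1[OF 4] conjunct2[OF 4]] show ?thesis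
      using 4 sub unfolding Jn_def by auto
  next
    case 5
    from chain1[OF tR tS conjunct2[OF 5] conjunct1[OF 5]] show ?thesis
      using 5 good_sub[OF iR] unfolding Jn_def by auto
  next
    case 6 then show ?thesis using good_trans[OF tR tS] unfolding Jn_def by auto
  qed
qed

lemma Dj_rtrancl_U:
  assumes "Dj R S \<subseteq> U" "trans U" "(x,a) \<in> (Dj R S)\<^sup>*"
  shows "x = a \<or> (x,a) \<in> U"
  using assms(3)
proof (induction rule: rtrancl_induct)
  case (step y z)
  then show ?case using assms(1,2) by (meson subsetD transD)
qed simp

lemma Jn_lub:
  assumes R: "R \<in> trans_int_rels n" and S: "S \<in> trans_int_rels n"
  shows "is_weak_lub (trans_int_rels n) R S (Jn n R S)"
proof -
  have tR: "trans R" and tS: "trans S" and iR: "int_rel n R" and iS: "int_rel n S"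
    using R S by (auto simp: trans_int_rels_def)
  note sub = Dj_trancl_sub[OF iR iS]
  have JT: "Jn n R S \<in> trans_int_rels n"
    unfolding trans_int_rels_def int_rel_def
    using Jn_trans[OF R S] sub good_sub[OF iR] by (auto simp: Jn_def)
  have incJ: "(a,b) \<in> Jn n R S \<Longrightarrow> a < b \<Longrightarrow> good R S a b" for a b
    using Dj_trancl_dec[of a b R S] unfolding Jn_def by auto
  have decJ: "(b,a) \<in> Jn n R S \<Longrightarrow> a < b \<Longrightarrow> (b,a) \<in> (Dj R S)\<^sup>+" for a b
    unfolding Jn_def good_def by auto
  have leR: "weak_le R (Jn n R S)"
    unfolding weak_le_def
  proof
    show "Inc (Jn n R S) \<subseteq> Inc R"
    proof
      fix p assume "p \<in> Inc (Jn n R S)"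
      then obtain a b where "p = (a,b)" "(a,b) \<in> Jn n R S" "a < b" by (auto simp: Inc_def)
      then show "p \<in> Inc R" using incJ[of a b] good_mem[of R S a b] by auto
    qed
    show "Dec R \<subseteq> Dec (Jn n R S)"
      by (auto simp: Dec_def Jn_def Dj_def)
  qed
  have leS: "weak_le S (Jn n R S)"
    unfolding weak_le_def
  proof
    show "Inc (Jn n R S) \<subseteq> Inc S"
    proof
      fix p assume "p \<in> Inc (Jn n R S)"
      then obtain a b where "p = (a,b)" "(a,b) \<in> Jn n R S" "a < b" by (auto simp: Inc_def)
      then show "p \<in> Inc S" using incJ[of a b] good_mem[of R S a b] by auto
    qed
    show "Dec S \<subseteq> Dec (Jn n R S)"
      by (auto simp: Dec_def Jn_def Dj_def)
  qed
  have least: "weak_le (Jn n R S) U" if U: "U \<in> trans_int_rels n" "weak_le R U" "weak_le S U" for U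
  proof -
    have tU: "trans U" using U by (auto simp: trans_int_rels_def)
    have DU: "Dj R S \<subseteq> U" using U(2,3) unfolding weak_le_def Dj_def by (auto simp: Dec_def)
    have IU: "Inc U \<subseteq> Inc R" "Inc U \<subseteq> Inc S" using U(2,3) unfolding weak_le_def by auto
    have "Inc U \<subseteq> Inc (Jn n R S)"
    proof
      fix p assume "p \<in> Inc U"
      then obtain a c where p: "p = (a,c)" "(a,c) \<in> U" "a < c" by (auto simp: Inc_def)
      have "good R S a c" unfolding good_def
      proof (rule conjI[OF p(3)], intro allI impI)
        fix x z assume h: "(x,a) \<in> (Dj R S)\<^sup>*" "(c,z) \<in> (Dj R S)\<^sup>*" "x < z"
        have "x = a \<or> (x,a) \<in> U" "c = z \<or> (c,z) \<in> U"
          using Dj_rtrancl_U[OF DU tU] h by auto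
        then have "(x,z) \<in> U" using p(2) tU by (meson transD)
        then have "(x,z) \<in> Inc U" using h(3) by simp
        then have "(x,z) \<in> Inc R" "(x,z) \<in> Inc S" using IU by blast+
        then show "(x,z) \<in> R \<and> (x,z) \<in> S" by simp
      qed
      then show "p \<in> Inc (Jn n R S)" using p by (auto simp: Jn_def)
    qed
    moreover have "Dec (Jn n R S) \<subseteq> Dec U"
    proof
      fix p assume "p \<in> Dec (Jn n R S)"
      then obtain a b where p: "p = (b,a)" "(b,a) \<in> Jn n R S" "a < b" by (auto simp: Dec_def)
      have "(b,a) \<in> U\<^sup>+" using decJ[OF p(2,3)] DU trancl_mono by blast
      then show "p \<in> Dec U" using p tU by simp
    qed
    ultimately show ?thesis unfolding weak_le_def by auto
  qed
  show ?thesis unfolding is_weak_lub_def using JT leR leS least by blast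
qed

lemma Jn_antisym:
  assumes R: "R \<in> int_posets n" and S: "S \<in> int_posets n"
  shows "antisym (Jn n R S)"
proof (rule antisymI, rule ccontr)
  have tR: "trans R" and tS: "trans S" and aR: "antisym R" and aS: "antisym S"
    using R S by (auto simp: int_posets_def)
  fix a b assume ab: "(a,b) \<in> Jn n R S" and ba: "(b,a) \<in> Jn n R S" and ne: "a \<noteq> b"
  have key: False if "(x,y) \<in> Jn n R S" "(y,x) \<in> Jn n R S" "x < y" for x y
  proof -
    have g: "good R S x y" using that Dj_trancl_dec[of x y R S] unfolding Jn_def by auto
    have d: "(y,x) \<in> (Dj R S)\<^sup>+" using that unfolding Jn_def good_def by auto
    from chain1[OF tR tS d g] obtain w where w: "good R S x w" "(w,x) \<in> Dj R S"
      using Dj_trancl_dec[of x x R S] by auto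
    have "(x,w) \<in> R" "(x,w) \<in> S" "x < w" using good_mem[OF w(1)] w(1) by (auto simp: good_def)
    then show False using w(2) aR aS unfolding Dj_def by (auto dest: antisymD)
  qed
  show False using key[OF ab ba] key[OF ba ab] ne by linarith
qed

lemma weak_le_conv: "weak_le (A\<inverse>) (B\<inverse>) \<longleftrightarrow> weak_le B A"
  unfolding weak_le_def Inc_def Dec_def by auto

lemma int_rel_conv: "int_rel n (A\<inverse>) \<longleftrightarrow> int_rel n A"
  unfolding int_rel_def by auto

lemma T_conv: "A \<in> trans_int_rels n \<Longrightarrow> A\<inverse> \<in> trans_int_rels n"
  unfolding trans_int_rels_def by (simp add: int_rel_conv)

lemma P_conv: "A \<in> int_posets n \<Longrightarrow> A\<inverse> \<in> int_posets n"
  unfolding int_posets_def by (simp add: int_rel_conv)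

lemma glb_from_lub:
  assumes "is_weak_lub (trans_int_rels n) (R\<inverse>) (S\<inverse>) J"
  shows "is_weak_glb (trans_int_rels n) R S (J\<inverse>)"
proof -
  have J: "J \<in> trans_int_rels n" "weak_le (R\<inverse>) J" "weak_le (S\<inverse>) J"
    and l: "\<And>X. X \<in> trans_int_rels n \<Longrightarrow> weak_le (R\<inverse>) X \<Longrightarrow> weak_le (S\<inverse>) X \<Longrightarrow> weak_le J X"
    using assms unfolding is_weak_lub_def by auto
  have "weak_le (J\<inverse>) R" using J(2) weak_le_conv[of R "J\<inverse>"] by simp
  moreover have "weak_le (J\<inverse>) S" using J(3) weak_le_conv[of S "J\<inverse>"] by simp
  moreover have "weak_le X (J\<inverse>)" if "X \<in> trans_int_rels n" "weak_le X R" "weak_le X S" for X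
  proof -
    have "weak_le (R\<inverse>) (X\<inverse>)" "weak_le (S\<inverse>) (X\<inverse>)" using that weak_le_conv by auto
    then have "weak_le J (X\<inverse>)" using l T_conv[OF that(1)] by auto
    then show ?thesis using weak_le_conv[of "J\<inverse>" X] by simp
  qed
  ultimately show ?thesis unfolding is_weak_glb_def using T_conv[OF J(1)] by auto
qed

lemma weak_le_antisym:
  assumes "int_rel n A" "int_rel n B" "weak_le A B" "weak_le B A"
  shows "A = B"
proof -
  have I: "Inc A = Inc B" and D: "Dec A = Dec B" using assms(3,4) unfolding weak_le_def by auto
  have "p \<in> A \<longleftrightarrow> p \<in> B" for p
  proof (cases p)
    case (Pair a b)
    consider "a < b" | "b < a" | "a = b" by linarith
    then show ?thesis
    proof cases
      case 1 then show ?thesis using I Pair by (metis Inc_iff)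
    next
      case 2 then show ?thesis using D Pair by (metis Dec_iff)
    next
      case 3 then show ?thesis using assms(1,2) Pair unfolding int_rel_def by auto
    qed
  qed
  then show ?thesis by auto
qed

lemma lub_unique:
  "is_weak_lub (trans_int_rels n) R S J \<Longrightarrow> is_weak_lub (trans_int_rels n) R S J' \<Longrightarrow> J = J'"
  unfolding is_weak_lub_def trans_int_rels_def using weak_le_antisym by blast

lemma glb_unique:
  "is_weak_glb (trans_int_rels n) R S J \<Longrightarrow> is_weak_glb (trans_int_rels n) R S J' \<Longrightarrow> J = J'"
  unfolding is_weak_glb_def trans_int_rels_def using weak_le_antisym by blast

lemma not_sub:
  assumes "n \<ge> 3"
  shows "\<not> weak_sublattice (trans_int_rels n) (int_rels n)"
proof
  assume ws: "weak_sublattice (trans_int_rels n) (int_rels n)"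
  define R where "R = Id_on {1..n} \<union> {(1::nat,2::nat)}"
  define S where "S = Id_on {1..n} \<union> {(2::nat,3::nat)}"
  define M where "M = Id_on {1..n} \<union> {(1::nat,2::nat),(2,3)}"
  have RT: "R \<in> trans_int_rels n" using assms unfolding R_def trans_int_rels_def int_rel_def trans_def by auto
  have ST: "S \<in> trans_int_rels n" using assms unfolding S_def trans_int_rels_def int_rel_def trans_def by auto
  have DR: "Dec R = {}" unfolding R_def Dec_def by auto
  have DS: "Dec S = {}" unfolding S_def Dec_def by auto
  have DM: "Dec M = {}" unfolding M_def Dec_def by auto
  have "is_weak_glb (int_rels n) R S M"
    unfolding is_weak_glb_def
  proof (intro conjI ballI impI)
    show "M \<in> int_rels n" using assms unfolding M_def int_rels_def int_rel_def by auto
    show "weak_le M R" unfolding weak_le_def DM R_def M_def Inc_def by auto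
    show "weak_le M S" unfolding weak_le_def DM S_def M_def Inc_def by auto
    fix X assume "X \<in> int_rels n" and h: "weak_le X R \<and> weak_le X S"
    then have "Inc R \<subseteq> Inc X" "Inc S \<subseteq> Inc X" "Dec X = {}" using DR unfolding weak_le_def by auto
    moreover have "Inc M = Inc R \<union> Inc S" unfolding M_def R_def S_def Inc_def by auto
    ultimately show "weak_le X M" unfolding weak_le_def DM by auto
  qed
  then have "M \<in> trans_int_rels n" using ws RT ST unfolding weak_sublattice_def by blast
  then have "trans M" by (simp add: trans_int_rels_def)
  moreover have "(1,2) \<in> M" "(2,3) \<in> M" "(1::nat,3::nat) \<notin> M" unfolding M_def by auto
  ultimately show False by (meson transD)
qed

theorem mainTheorem5:
  fixes n :: nat
  assumes "n \<ge> 1"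
  shows "weak_lattice (trans_int_rels n)
    \<and> (n \<ge> 3 \<longrightarrow> \<not> weak_sublattice (trans_int_rels n) (int_rels n))
    \<and> weak_sublattice (int_posets n) (trans_int_rels n)"
proof (intro conjI impI)
  have glbT: "is_weak_glb (trans_int_rels n) R S ((Jn n (R\<inverse>) (S\<inverse>))\<inverse>)"
    if "R \<in> trans_int_rels n" "S \<in> trans_int_rels n" for R S
    using glb_from_lub[OF Jn_lub[OF T_conv[OF that(1)] T_conv[OF that(2)]]] .
  show "weak_lattice (trans_int_rels n)"
    unfolding weak_lattice_def using glbT Jn_lub by blast
  show "\<not> weak_sublattice (trans_int_rels n) (int_rels n)" if "n \<ge> 3" using not_sub that by blast
  have PT: "int_posets n \<subseteq> trans_int_rels n" unfolding int_posets_def trans_int_rels_def by auto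
  show "weak_sublattice (int_posets n) (trans_int_rels n)"
    unfolding weak_sublattice_def
  proof (intro conjI ballI allI impI PT)
    fix R S M assume R: "R \<in> int_posets n" and S: "S \<in> int_posets n"
      and M: "is_weak_glb (trans_int_rels n) R S M"
    have "M = (Jn n (R\<inverse>) (S\<inverse>))\<inverse>" using glb_unique[OF M glbT] R S PT by blast
    moreover have "antisym (Jn n (R\<inverse>) (S\<inverse>))" using Jn_antisym[OF P_conv[OF R] P_conv[OF S]] .
    moreover have "(Jn n (R\<inverse>) (S\<inverse>)) \<in> trans_int_rels n"
      using Jn_lub[OF T_conv T_conv] R S PT unfolding is_weak_lub_def by blast
    ultimately show "M \<in> int_posets n" unfolding int_posets_def trans_int_rels_def
      by (simp add: int_rel_conv)
  next
    fix R S J assume R: "R \<in> int_posets n" and S: "S \<in> int_posets n"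
      and J: "is_weak_lub (trans_int_rels n) R S J"
    have "J = Jn n R S" using lub_unique[OF J Jn_lub] R S PT by blast
    moreover have "antisym (Jn n R S)" using Jn_antisym[OF R S] .
    moreover have "Jn n R S \<in> trans_int_rels n" using Jn_lub R S PT unfolding is_weak_lub_def by blast
    ultimately show "J \<in> int_posets n" unfolding int_posets_def trans_int_rels_def by simp
  qed
qed

end
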